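(* Let $N\geq 1$, let $U\in M_{2N}(\mathbb{C})$ be unitary with $U^{\rm T}=-U$, and let $\Phi^U_{4N}$ be the map defined on block matrices $X=\begin{pmatrix} X_{11} & X_{12}\\ X_{21} & X_{22}\end{pmatrix}$ ($X_{kl}\in M_{2N}(\mathbb{C})$) by $$\Phi^U_{4N}(X)=\frac{1}{2N}\begin{pmatrix} \mathbb{I}_{2N}\,\mathrm{Tr}X_{22} & -\big(X_{12}+UX_{21}^{\rm T}U^\dagger\big)\\ -\big(X_{21}+UX_{12}^{\rm T}U^\dagger\big) & \mathbb{I}_{2N}\,\mathrm{Tr}X_{11}\end{pmatrix}.$$ Let $W=(\mathrm{id}\otimes\Phi^U_{4N})P^+_{4N}$, where $P^+_{4N}=\frac{1}{4N}\sum_{k,l=1}^{4N}|k\rangle\langle l|\otimes|k\rangle\langle l|$. Then $W$ is an optimal entanglement witness: there is no nonzero positive semidefinite operator $A$ on $\mathbb{C}^{4N}\otimes\mathbb{C}^{4N}$ such that $W-A$ is block-positive (i.e. $\langle\psi\otimes\phi|(W-A)|\psi\otimes\phi\rangle\ge 0$ for all $\psi,\phi\in\mathbb{C}^{4N}$).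
   Context: $\{|k\rangle\}$ is the standard basis of $\mathbb{C}^{4N}$; $\mathrm{id}$ is the identity map on $M_{4N}(\mathbb{C})$. An entanglement witness is a block-positive operator that is not positive semidefinite; it is optimal if subtracting any nonzero positive semidefinite operator destroys block-positivity. *)

theory Defs
  imports Complex_Main "HOL-Library.Complex_Order"
begin

text \<open>Matrices are represented as functions nat => nat => complex, only entries with
  indices below the dimension being relevant. Operators on C^d (x) C^d are functions on
  index pairs (i,a), with i the index of the first factor and a of the second.\<close>

definition unitary_mat :: "nat \<Rightarrow> (nat \<Rightarrow> nat \<Rightarrow> complex) \<Rightarrow> bool" where
  "unitary_mat n U \<longleftrightarrow>
     (\<forall>i<n. \<forall>j<n. (\<Sum>k<n. cnj (U k i) * U k j) = (if i = j then 1 else 0)) \<and>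
     (\<forall>i<n. \<forall>j<n. (\<Sum>k<n. U i k * cnj (U j k)) = (if i = j then 1 else 0))"

definition antisymmetric_mat :: "nat \<Rightarrow> (nat \<Rightarrow> nat \<Rightarrow> complex) \<Rightarrow> bool" where
  "antisymmetric_mat n U \<longleftrightarrow> (\<forall>i<n. \<forall>j<n. U j i = - U i j)"

text \<open>The map Phi^U_{4N}, with block size n = 2N and d = 4N = 2n.
  (U X^T U^dagger)_{ac} = sum_{p,q} U_{ap} X_{qp} conj(U_{cq}).\<close>

definition PhiU :: "nat \<Rightarrow> (nat \<Rightarrow> nat \<Rightarrow> complex) \<Rightarrow> (nat \<Rightarrow> nat \<Rightarrow> complex) \<Rightarrow> nat \<Rightarrow> nat \<Rightarrow> complex" where
  "PhiU N U X a b =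
    (let n = 2 * N;
         X11 = (\<lambda>i j. X i j); X12 = (\<lambda>i j. X i (n + j));
         X21 = (\<lambda>i j. X (n + i) j); X22 = (\<lambda>i j. X (n + i) (n + j));
         conjT = (\<lambda>Y a c. \<Sum>p<n. \<Sum>q<n. U a p * Y q p * cnj (U c q))
     in (if a < n \<and> b < n then (if a = b then (\<Sum>i<n. X22 i i) else 0)
         else if a < n \<and> n \<le> b then - (X12 a (b - n) + conjT X21 a (b - n))
         else if n \<le> a \<and> b < n then - (X21 (a - n) b + conjT X12 (a - n) b)
         else (if a = b then (\<Sum>i<n. X11 i i) else 0)) / of_nat (2 * N))"

definition mat_unit :: "nat \<Rightarrow> nat \<Rightarrow> nat \<Rightarrow> nat \<Rightarrow> complex" where
  "mat_unit k l = (\<lambda>i j. if i = k \<and> j = l then 1 else 0)"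

text \<open>W = (id (x) Phi)(P^+) with P^+ = 1/(4N) sum_{k,l} |k><l| (x) |k><l|, so
  W((i,a),(j,b)) = Phi(|i><j|)_{ab} / (4N).\<close>
definition W_op :: "nat \<Rightarrow> (nat \<Rightarrow> nat \<Rightarrow> complex) \<Rightarrow> nat \<times> nat \<Rightarrow> nat \<times> nat \<Rightarrow> complex" where
  "W_op N U = (\<lambda>(i, a) (j, b). PhiU N U (mat_unit i j) a b / of_nat (4 * N))"

definition block_positive :: "nat \<Rightarrow> (nat \<times> nat \<Rightarrow> nat \<times> nat \<Rightarrow> complex) \<Rightarrow> bool" where
  "block_positive d M \<longleftrightarrow>
     (\<forall>\<psi> \<phi> :: nat \<Rightarrow> complex.
        0 \<le> (\<Sum>i<d. \<Sum>a<d. \<Sum>j<d. \<Sum>b<d.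
               cnj (\<psi> i * \<phi> a) * M (i, a) (j, b) * (\<psi> j * \<phi> b)))"

definition psd_op :: "nat \<Rightarrow> (nat \<times> nat \<Rightarrow> nat \<times> nat \<Rightarrow> complex) \<Rightarrow> bool" where
  "psd_op d A \<longleftrightarrow>
     (\<forall>x \<in> {..<d} \<times> {..<d}. \<forall>y \<in> {..<d} \<times> {..<d}. A y x = cnj (A x y)) \<and>
     (\<forall>v :: nat \<times> nat \<Rightarrow> complex.
        0 \<le> (\<Sum>x \<in> {..<d} \<times> {..<d}. \<Sum>y \<in> {..<d} \<times> {..<d}. cnj (v x) * A x y * v y))"

definition nonzero_op :: "nat \<Rightarrow> (nat \<times> nat \<Rightarrow> nat \<times> nat \<Rightarrow> complex) \<Rightarrow> bool" where
  "nonzero_op d A \<longleftrightarrow> (\<exists>x \<in> {..<d} \<times> {..<d}. \<exists>y \<in> {..<d} \<times> {..<d}. A x y \<noteq> 0)"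

definition entanglement_witness :: "nat \<Rightarrow> (nat \<times> nat \<Rightarrow> nat \<times> nat \<Rightarrow> complex) \<Rightarrow> bool" where
  "entanglement_witness d W \<longleftrightarrow> block_positive d W \<and> \<not> psd_op d W"

definition optimal_entanglement_witness :: "nat \<Rightarrow> (nat \<times> nat \<Rightarrow> nat \<times> nat \<Rightarrow> complex) \<Rightarrow> bool" where
  "optimal_entanglement_witness d W \<longleftrightarrow>
     entanglement_witness d W \<and>
     \<not> (\<exists>A. psd_op d A \<and> nonzero_op d A \<and> block_positive d (\<lambda>x y. W x y - A x y))"

end

theory Submission
  imports Defs
begin

lemma sum_split_add: fixes m :: nat shows "(\<Sum>i<n+m. f i) = (\<Sum>i<n. f i) + (\<Sum>i<m. f (n+i))"
  by (induction m) (auto simp: add.assoc)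

definition ip :: "nat \<Rightarrow> (nat \<Rightarrow> complex) \<Rightarrow> (nat \<Rightarrow> complex) \<Rightarrow> complex" where
  "ip n u v = (\<Sum>a<n. cnj (u a) * v a)"

definition nsq :: "nat \<Rightarrow> (nat \<Rightarrow> complex) \<Rightarrow> real" where
  "nsq n u = (\<Sum>a<n. (cmod (u a))\<^sup>2)"

lemma ip_cnj: "cnj (ip n u v) = ip n v u"
  unfolding ip_def by (simp add: mult.commute)

lemma cnj_self: "cnj z * z = complex_of_real ((cmod z)\<^sup>2)"
  by (metis complex_norm_square mult.commute)
lemma self_cnj: "z * cnj z = complex_of_real ((cmod z)\<^sup>2)"
  by (metis complex_norm_square)

lemma ip_self: "ip n u u = of_real (nsq n u)"
proof -
  have "ip n u u = (\<Sum>a<n. complex_of_real ((cmod (u a))\<^sup>2))"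
    unfolding ip_def by (simp only: cnj_self)
  then show ?thesis unfolding nsq_def by (simp only: of_real_sum)
qed

lemma nsq_nonneg: "nsq n u \<ge> 0"
  unfolding nsq_def by (simp add: sum_nonneg)

lemma nsq_zero: "nsq n u = 0 \<Longrightarrow> a < n \<Longrightarrow> u a = 0"
  unfolding nsq_def using sum_nonneg_eq_0_iff[of "{..<n}" "\<lambda>a. (cmod (u a))\<^sup>2"] by auto

lemma ip_zero_left: "nsq n u = 0 \<Longrightarrow> ip n u v = 0"
  unfolding ip_def using nsq_zero by (auto intro: sum.neutral)

lemma ip_add_right: "ip n u (\<lambda>k. v k + w k) = ip n u v + ip n u w"
  unfolding ip_def by (simp add: distrib_left sum.distrib)
lemma ip_diff_right: "ip n u (\<lambda>k. v k - w k) = ip n u v - ip n u w"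
  unfolding ip_def by (simp add: right_diff_distrib sum_subtractf)
lemma ip_scale_right: "ip n u (\<lambda>k. c * v k) = c * ip n u v"
  unfolding ip_def by (simp add: sum_distrib_left algebra_simps)
lemma ip_add_left: "ip n (\<lambda>k. v k + w k) u = ip n v u + ip n w u"
  unfolding ip_def by (simp add: distrib_right sum.distrib)
lemma ip_diff_left: "ip n (\<lambda>k. v k - w k) u = ip n v u - ip n w u"
  unfolding ip_def by (simp add: left_diff_distrib sum_subtractf)
lemma ip_scale_left: "ip n (\<lambda>k. c * v k) u = cnj c * ip n v u"
  unfolding ip_def by (simp add: sum_distrib_left algebra_simps)

lemma bessel:
  assumes o: "ip n x x' = 0" and e: "nsq n x' = nsq n x"
  shows "(cmod (ip n x f))\<^sup>2 + (cmod (ip n x' f))\<^sup>2 \<le> nsq n x * nsq n f"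
proof (cases "nsq n x = 0")
  case True
  then show ?thesis using e by (simp add: ip_zero_left nsq_nonneg)
next
  case False
  define s where "s = nsq n x"
  have sp: "s > 0" using False nsq_nonneg[of n x] s_def by auto
  define a where "a = ip n x f"
  define b where "b = ip n x' f"
  define w where "w = (\<lambda>k. complex_of_real s * f k - a * x k - b * x' k)"
  have o2: "ip n x' x = 0" using o ip_cnj[of n x x'] by simp
  have fx: "ip n f x = cnj a" using ip_cnj a_def by metis
  have fx': "ip n f x' = cnj b" using ip_cnj b_def by metis
  have "ip n w w = of_real s * (of_real s * of_real (nsq n f) - a * cnj a - b * cnj b)"
    unfolding w_def
    by (simp add: ip_diff_left ip_diff_right ip_scale_left ip_scale_right o o2 fx fx' ip_self e
        a_def[symmetric] b_def[symmetric] s_def[symmetric]) (simp add: algebra_simps)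
  also have "\<dots> = of_real (s * (s * nsq n f - (cmod a)\<^sup>2 - (cmod b)\<^sup>2))"
    unfolding self_cnj by simp
  finally have "nsq n w = s * (s * nsq n f - (cmod a)\<^sup>2 - (cmod b)\<^sup>2)"
    using ip_self[of n w] of_real_eq_iff by metis
  then have "0 \<le> s * (s * nsq n f - (cmod a)\<^sup>2 - (cmod b)\<^sup>2)" using nsq_nonneg by metis
  then have "0 \<le> s * nsq n f - (cmod a)\<^sup>2 - (cmod b)\<^sup>2" using sp
    by (simp add: zero_le_mult_iff)
  then show ?thesis unfolding a_def b_def s_def by simp
qed

lemma PhiU_add: "PhiU N U (\<lambda>p q. X p q + Y p q) a b = PhiU N U X a b + PhiU N U Y a b"
proof -
  have e1: "\<And>f g. (\<Sum>p<2*N. \<Sum>q<2*N. U a p * (f q p + g q p) * cnj (U c q)) = 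
      (\<Sum>p<2*N. \<Sum>q<2*N. U a p * f q p * cnj (U c q)) + (\<Sum>p<2*N. \<Sum>q<2*N. U a p * g q p * cnj (U c q))" for a c
    by (simp add: sum.distrib algebra_simps)
  show ?thesis
  unfolding PhiU_def Let_def
  apply (cases "a < 2*N"; cases "b < 2*N")
  by (simp_all add: e1 sum.distrib add_divide_distrib diff_divide_distrib)
qed

lemma PhiU_scale: "PhiU N U (\<lambda>p q. c * X p q) a b = c * PhiU N U X a b"
proof -
  have e1: "\<And>f. (\<Sum>p<2*N. \<Sum>q<2*N. U a p * (c * f q p) * cnj (U d q)) = 
      c * (\<Sum>p<2*N. \<Sum>q<2*N. U a p * f q p * cnj (U d q))" for a d
    by (simp add: sum_distrib_left mult.assoc mult.left_commute)
  show ?thesis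
  unfolding PhiU_def Let_def
  apply (cases "a < 2*N"; cases "b < 2*N")
  by (simp_all add: e1 sum_distrib_left[symmetric] distrib_left right_diff_distrib)
qed

lemma sum_delta2: "p < (M::nat) \<Longrightarrow> q < M \<Longrightarrow> (\<Sum>i<M. \<Sum>j<M. if p = i \<and> q = j then g i j else 0) = (g p q :: complex)"
proof -
  assume a: "p < M" "q < M"
  have "(\<Sum>j<M. if p = i \<and> q = j then g i j else 0) = (if p = i then g i q else 0)" for i
  proof (cases "p = i")
    case True
    have "(\<Sum>j<M. if p = i \<and> q = j then g i j else 0) = (\<Sum>j<M. if q = j then g i j else 0)"
      using True by simp
    also have "\<dots> = g i q" using a(2) by simp
    finally show ?thesis using True by simp
  qed simp
  then show ?thesis using a by simp
qed

lemma PhiU_zero: "PhiU N U (\<lambda>p q. 0) a b = 0"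
  unfolding PhiU_def Let_def by simp

lemma PhiU_sum: "finite K \<Longrightarrow> PhiU N U (\<lambda>p q. \<Sum>k\<in>K. X k p q) a b = (\<Sum>k\<in>K. PhiU N U (X k) a b)"
proof (induction K rule: finite_induct)
  case empty then show ?case by (simp add: PhiU_zero)
next
  case (insert k K)
  then show ?case by (simp add: PhiU_add)
qed

lemma PhiU_restrict:
  assumes "a < 4*N" "b < 4*N" "\<And>p q. p < 4*N \<Longrightarrow> q < 4*N \<Longrightarrow> X p q = Y p q"
  shows "PhiU N U X a b = PhiU N U Y a b"
  using assms unfolding PhiU_def Let_def
  by (auto intro!: sum.cong)

lemma PhiU_lin:
  assumes "a < 4*N" "b < 4*N"
  shows "(\<Sum>i<4*N. \<Sum>j<4*N. cnj (\<psi> i) * \<psi> j * PhiU N U (mat_unit i j) a b)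
       = PhiU N U (\<lambda>p q. cnj (\<psi> p) * \<psi> q) a b"
proof -
  have "(\<Sum>i<4*N. \<Sum>j<4*N. cnj (\<psi> i) * \<psi> j * PhiU N U (mat_unit i j) a b)
     = PhiU N U (\<lambda>p q. \<Sum>i<4*N. \<Sum>j<4*N. cnj (\<psi> i) * \<psi> j * mat_unit i j p q) a b"
    by (simp add: PhiU_sum PhiU_scale)
  also have "\<dots> = PhiU N U (\<lambda>p q. cnj (\<psi> p) * \<psi> q) a b"
    by (rule PhiU_restrict[OF assms]) (simp add: mat_unit_def if_distrib[of "\<lambda>x. _ * x"] sum_delta2 cong: if_cong)
  finally show ?thesis .
qed

definition BF :: "nat \<Rightarrow> (nat \<times> nat \<Rightarrow> nat \<times> nat \<Rightarrow> complex) \<Rightarrow> (nat \<Rightarrow> complex) \<Rightarrow> (nat \<Rightarrow> complex) \<Rightarrow> complex" where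
  "BF d M \<psi> \<phi> = (\<Sum>i<d. \<Sum>a<d. \<Sum>j<d. \<Sum>b<d. cnj (\<psi> i * \<phi> a) * M (i, a) (j, b) * (\<psi> j * \<phi> b))"

lemma sum4_swap:
  "(\<Sum>i\<in>A. \<Sum>a\<in>B. \<Sum>j\<in>A. \<Sum>b\<in>B. F i a j b) = (\<Sum>a\<in>B. \<Sum>b\<in>B. \<Sum>i\<in>A. \<Sum>j\<in>A. F i a j b)"
proof -
  have "(\<Sum>i\<in>A. \<Sum>a\<in>B. \<Sum>j\<in>A. \<Sum>b\<in>B. F i a j b) = (\<Sum>i\<in>A. \<Sum>a\<in>B. \<Sum>b\<in>B. \<Sum>j\<in>A. F i a j b)"
    by (rule sum.cong[OF refl], rule sum.cong[OF refl], rule sum.swap)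
  also have "\<dots> = (\<Sum>a\<in>B. \<Sum>i\<in>A. \<Sum>b\<in>B. \<Sum>j\<in>A. F i a j b)"
    by (rule sum.swap)
  also have "\<dots> = (\<Sum>a\<in>B. \<Sum>b\<in>B. \<Sum>i\<in>A. \<Sum>j\<in>A. F i a j b)"
    by (rule sum.cong[OF refl], rule sum.swap)
  finally show ?thesis .
qed

lemma stepA:
  "BF (4*N) (W_op N U) \<psi> \<phi> =
     (\<Sum>a<4*N. \<Sum>b<4*N. cnj (\<phi> a) * \<phi> b * PhiU N U (\<lambda>p q. cnj (\<psi> p) * \<psi> q) a b) / of_nat (4*N)"
proof -
  have "BF (4*N) (W_op N U) \<psi> \<phi> = (\<Sum>a<4*N. \<Sum>b<4*N. \<Sum>i<4*N. \<Sum>j<4*N.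
      cnj (\<phi> a) * \<phi> b * (cnj (\<psi> i) * \<psi> j * PhiU N U (mat_unit i j) a b) / of_nat (4*N))"
    unfolding BF_def W_op_def
    by (subst sum4_swap) (simp add: mult_ac)
  also have "\<dots> = (\<Sum>a<4*N. \<Sum>b<4*N. cnj (\<phi> a) * \<phi> b *
      (\<Sum>i<4*N. \<Sum>j<4*N. cnj (\<psi> i) * \<psi> j * PhiU N U (mat_unit i j) a b) / of_nat (4*N))"
    by (simp add: sum_distrib_left sum_divide_distrib)
  also have "\<dots> = (\<Sum>a<4*N. \<Sum>b<4*N. cnj (\<phi> a) * \<phi> b *
      PhiU N U (\<lambda>p q. cnj (\<psi> p) * \<psi> q) a b / of_nat (4*N))"
    by (intro sum.cong refl) (simp add: PhiU_lin)
  finally show ?thesis by (simp add: sum_divide_distrib)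
qed

definition Uv :: "nat \<Rightarrow> (nat \<Rightarrow> nat \<Rightarrow> complex) \<Rightarrow> (nat \<Rightarrow> complex) \<Rightarrow> nat \<Rightarrow> complex" where
  "Uv N U v = (\<lambda>a. \<Sum>p<2*N. U a p * v p)"

lemma Uv_prod: "Uv N U v a * cnj (Uv N U w c) = (\<Sum>p<2*N. \<Sum>q<2*N. U a p * (cnj (w q) * v p) * cnj (U c q))"
  unfolding Uv_def by (simp add: cnj_sum sum_product mult_ac)

lemma PhiU_LL: "a < 2*N \<Longrightarrow> b < 2*N \<Longrightarrow> PhiU N U (\<lambda>p q. cnj (\<psi> p) * \<psi> q) a b =
   (if a = b then (\<Sum>i<2*N. cnj (\<psi> (2*N+i)) * \<psi> (2*N+i)) else 0) / of_nat (2*N)"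
  unfolding PhiU_def Let_def by simp

lemma PhiU_HH: "c < 2*N \<Longrightarrow> e < 2*N \<Longrightarrow> PhiU N U (\<lambda>p q. cnj (\<psi> p) * \<psi> q) (2*N+c) (2*N+e) =
   (if c = e then (\<Sum>i<2*N. cnj (\<psi> i) * \<psi> i) else 0) / of_nat (2*N)"
  unfolding PhiU_def Let_def by simp

lemma PhiU_LH: "a < 2*N \<Longrightarrow> c < 2*N \<Longrightarrow> PhiU N U (\<lambda>p q. cnj (\<psi> p) * \<psi> q) a (2*N+c) =
   - (cnj (\<psi> a) * \<psi> (2*N+c) + Uv N U \<psi> a * cnj (Uv N U (\<lambda>q. \<psi> (2*N+q)) c)) / of_nat (2*N)"
  unfolding PhiU_def Let_def by (simp add: Uv_prod)

lemma PhiU_HL: "c < 2*N \<Longrightarrow> b < 2*N \<Longrightarrow> PhiU N U (\<lambda>p q. cnj (\<psi> p) * \<psi> q) (2*N+c) b =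
   - (cnj (\<psi> (2*N+c)) * \<psi> b + Uv N U (\<lambda>q. \<psi> (2*N+q)) c * cnj (Uv N U \<psi> b)) / of_nat (2*N)"
  unfolding PhiU_def Let_def by (simp add: Uv_prod)

lemma bilin:
  fixes x y u v u' v' :: "nat \<Rightarrow> complex"
  shows "(\<Sum>a\<in>A. \<Sum>c\<in>C. x a * y c * (u a * v c + u' a * v' c)) =
   (\<Sum>a\<in>A. x a * u a) * (\<Sum>c\<in>C. v c * y c) + (\<Sum>a\<in>A. x a * u' a) * (\<Sum>c\<in>C. v' c * y c)"
proof -
  have "(\<Sum>a\<in>A. \<Sum>c\<in>C. x a * y c * (u a * v c + u' a * v' c)) =
     (\<Sum>a\<in>A. \<Sum>c\<in>C. x a * u a * (v c * y c) + x a * u' a * (v' c * y c))"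
    by (intro sum.cong refl) (simp add: algebra_simps)
  then show ?thesis by (simp add: sum.distrib sum_product)
qed

lemma neg_div: "- ((A::complex) + B) / k = (- 1 / k) * (A + B)"
  by (cases "k = 0") (simp_all add: field_simps)

lemma PhiU_LH': "a < 2*N \<Longrightarrow> c < 2*N \<Longrightarrow> PhiU N U (\<lambda>p q. cnj (\<psi> p) * \<psi> q) a (2*N+c) =
   (- 1 / of_nat (2*N)) * (cnj (\<psi> a) * \<psi> (2*N+c) + Uv N U \<psi> a * cnj (Uv N U (\<lambda>q. \<psi> (2*N+q)) c))"
  by (simp only: PhiU_LH neg_div)
lemma PhiU_HL': "c < 2*N \<Longrightarrow> b < 2*N \<Longrightarrow> PhiU N U (\<lambda>p q. cnj (\<psi> p) * \<psi> q) (2*N+c) b =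
   (- 1 / of_nat (2*N)) * (cnj (\<psi> (2*N+c)) * \<psi> b + Uv N U (\<lambda>q. \<psi> (2*N+q)) c * cnj (Uv N U \<psi> b))"
  by (simp only: PhiU_HL neg_div)

lemma block_LH:
  "(\<Sum>a<2*N. \<Sum>c<2*N. cnj (\<phi> a) * \<phi> (2*N+c) * PhiU N U (\<lambda>p q. cnj (\<psi> p) * \<psi> q) a (2*N+c)) =
   - ((\<Sum>a<2*N. cnj (\<phi> a) * cnj (\<psi> a)) * (\<Sum>c<2*N. \<psi> (2*N+c) * \<phi> (2*N+c)) +
      (\<Sum>a<2*N. cnj (\<phi> a) * Uv N U \<psi> a) * (\<Sum>c<2*N. cnj (Uv N U (\<lambda>q. \<psi> (2*N+q)) c) * \<phi> (2*N+c)))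
     / of_nat (2*N)" (is "_ = ?rhs")
proof -
  have "(\<Sum>a<2*N. \<Sum>c<2*N. cnj (\<phi> a) * \<phi> (2*N+c) * PhiU N U (\<lambda>p q. cnj (\<psi> p) * \<psi> q) a (2*N+c)) =
    (\<Sum>a<2*N. \<Sum>c<2*N. (- 1 / of_nat (2*N)) * (cnj (\<phi> a) * \<phi> (2*N+c) * (cnj (\<psi> a) * \<psi> (2*N+c) + Uv N U \<psi> a * cnj (Uv N U (\<lambda>q. \<psi> (2*N+q)) c))))"
    by (intro sum.cong refl, subst PhiU_LH') (simp_all only: lessThan_iff mult.assoc mult.left_commute mult.commute)
  also have "\<dots> = (- 1 / of_nat (2*N)) * (\<Sum>a<2*N. \<Sum>c<2*N. cnj (\<phi> a) * \<phi> (2*N+c) * (cnj (\<psi> a) * \<psi> (2*N+c) + Uv N U \<psi> a * cnj (Uv N U (\<lambda>q. \<psi> (2*N+q)) c)))"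
    by (simp add: sum_distrib_left)
  also have "\<dots> = ?rhs"
    by (subst bilin, simp only: neg_div)
  finally show ?thesis .
qed

lemma block_HL:
  "(\<Sum>c<2*N. \<Sum>b<2*N. cnj (\<phi> (2*N+c)) * \<phi> b * PhiU N U (\<lambda>p q. cnj (\<psi> p) * \<psi> q) (2*N+c) b) =
   - ((\<Sum>c<2*N. cnj (\<phi> (2*N+c)) * cnj (\<psi> (2*N+c))) * (\<Sum>b<2*N. \<psi> b * \<phi> b) +
      (\<Sum>c<2*N. cnj (\<phi> (2*N+c)) * Uv N U (\<lambda>q. \<psi> (2*N+q)) c) * (\<Sum>b<2*N. cnj (Uv N U \<psi> b) * \<phi> b))
     / of_nat (2*N)" (is "_ = ?rhs")
proof -
  have "(\<Sum>c<2*N. \<Sum>b<2*N. cnj (\<phi> (2*N+c)) * \<phi> b * PhiU N U (\<lambda>p q. cnj (\<psi> p) * \<psi> q) (2*N+c) b) =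
    (\<Sum>c<2*N. \<Sum>b<2*N. (- 1 / of_nat (2*N)) * (cnj (\<phi> (2*N+c)) * \<phi> b * (cnj (\<psi> (2*N+c)) * \<psi> b + Uv N U (\<lambda>q. \<psi> (2*N+q)) c * cnj (Uv N U \<psi> b))))"
    by (intro sum.cong refl, subst PhiU_HL') (simp_all only: lessThan_iff mult.assoc mult.left_commute mult.commute)
  also have "\<dots> = (- 1 / of_nat (2*N)) * (\<Sum>c<2*N. \<Sum>b<2*N. cnj (\<phi> (2*N+c)) * \<phi> b * (cnj (\<psi> (2*N+c)) * \<psi> b + Uv N U (\<lambda>q. \<psi> (2*N+q)) c * cnj (Uv N U \<psi> b)))"
    by (simp add: sum_distrib_left)
  also have "\<dots> = ?rhs"
    by (subst bilin, simp only: neg_div)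
  finally show ?thesis .
qed

lemma block_LL:
  "(\<Sum>a<2*N. \<Sum>b<2*N. cnj (\<phi> a) * \<phi> b * PhiU N U (\<lambda>p q. cnj (\<psi> p) * \<psi> q) a b) =
   (\<Sum>a<2*N. cnj (\<phi> a) * \<phi> a) * (\<Sum>i<2*N. cnj (\<psi> (2*N+i)) * \<psi> (2*N+i)) / of_nat (2*N)"
proof -
  have "(\<Sum>a<2*N. \<Sum>b<2*N. cnj (\<phi> a) * \<phi> b * PhiU N U (\<lambda>p q. cnj (\<psi> p) * \<psi> q) a b) =
     (\<Sum>a<2*N. \<Sum>b<2*N. if a = b then cnj (\<phi> a) * \<phi> a * ((\<Sum>i<2*N. cnj (\<psi> (2*N+i)) * \<psi> (2*N+i)) / of_nat (2*N)) else 0)"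
    by (intro sum.cong refl) (simp add: PhiU_LL)
  also have "\<dots> = (\<Sum>a<2*N. cnj (\<phi> a) * \<phi> a * ((\<Sum>i<2*N. cnj (\<psi> (2*N+i)) * \<psi> (2*N+i)) / of_nat (2*N)))"
    by simp
  finally show ?thesis by (simp only: times_divide_eq_right sum_divide_distrib[symmetric] sum_distrib_right[symmetric])
qed

lemma block_HH:
  "(\<Sum>c<2*N. \<Sum>e<2*N. cnj (\<phi> (2*N+c)) * \<phi> (2*N+e) * PhiU N U (\<lambda>p q. cnj (\<psi> p) * \<psi> q) (2*N+c) (2*N+e)) =
   (\<Sum>c<2*N. cnj (\<phi> (2*N+c)) * \<phi> (2*N+c)) * (\<Sum>i<2*N. cnj (\<psi> i) * \<psi> i) / of_nat (2*N)"
proof -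
  have "(\<Sum>c<2*N. \<Sum>e<2*N. cnj (\<phi> (2*N+c)) * \<phi> (2*N+e) * PhiU N U (\<lambda>p q. cnj (\<psi> p) * \<psi> q) (2*N+c) (2*N+e)) =
     (\<Sum>c<2*N. \<Sum>e<2*N. if c = e then cnj (\<phi> (2*N+c)) * \<phi> (2*N+c) * ((\<Sum>i<2*N. cnj (\<psi> i) * \<psi> i) / of_nat (2*N)) else 0)"
    by (intro sum.cong refl) (simp add: PhiU_HH)
  also have "\<dots> = (\<Sum>c<2*N. cnj (\<phi> (2*N+c)) * \<phi> (2*N+c) * ((\<Sum>i<2*N. cnj (\<psi> i) * \<psi> i) / of_nat (2*N)))"
    by simp
  finally show ?thesis by (simp only: times_divide_eq_right sum_divide_distrib[symmetric] sum_distrib_right[symmetric])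
qed

lemma split4: fixes N :: nat shows "(\<Sum>a<4*N. \<Sum>b<4*N. F a b) =
   (\<Sum>a<2*N. \<Sum>b<2*N. F a b) + (\<Sum>a<2*N. \<Sum>c<2*N. F a (2*N+c)) +
   (\<Sum>c<2*N. \<Sum>b<2*N. F (2*N+c) b) + (\<Sum>c<2*N. \<Sum>e<2*N. F (2*N+c) (2*N+e))"
proof -
  have e: "4*N = 2*N + 2*N" by simp
  show ?thesis unfolding e sum_split_add by (simp add: sum.distrib add.assoc)
qed

lemma T_plus_cnj: "T + cnj T = complex_of_real (2 * Re T)"
  by (simp add: complex_eq_iff)

lemma keyform:
  fixes N :: nat and U \<psi> \<phi>
  defines "n \<equiv> 2*N"
  defines "R \<equiv> (\<lambda>c. \<psi> (n+c))" and "G \<equiv> (\<lambda>c. \<phi> (n+c))"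
  defines "x \<equiv> (\<lambda>a. cnj (\<psi> a))" and "y \<equiv> (\<lambda>c. cnj (\<psi> (n+c)))"
  defines "T1 \<equiv> ip n \<phi> x * ip n y G + ip n \<phi> (Uv N U \<psi>) * ip n (Uv N U R) G"
  shows "BF (4*N) (W_op N U) \<psi> \<phi> =
     complex_of_real (nsq n \<phi> * nsq n R + nsq n G * nsq n \<psi> - 2 * Re T1) / (of_nat (2*N) * of_nat (4*N))"
proof -
  have LL: "(\<Sum>a<2*N. \<Sum>b<2*N. cnj (\<phi> a) * \<phi> b * PhiU N U (\<lambda>p q. cnj (\<psi> p) * \<psi> q) a b)
      = ip n \<phi> \<phi> * ip n R R / of_nat (2*N)"
    unfolding block_LL ip_def n_def R_def by simp
  have HH: "(\<Sum>c<2*N. \<Sum>e<2*N. cnj (\<phi> (2*N+c)) * \<phi> (2*N+e) * PhiU N U (\<lambda>p q. cnj (\<psi> p) * \<psi> q) (2*N+c) (2*N+e))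
      = ip n G G * ip n \<psi> \<psi> / of_nat (2*N)"
    unfolding block_HH ip_def n_def G_def by simp
  have LH: "(\<Sum>a<2*N. \<Sum>c<2*N. cnj (\<phi> a) * \<phi> (2*N+c) * PhiU N U (\<lambda>p q. cnj (\<psi> p) * \<psi> q) a (2*N+c))
      = - T1 / of_nat (2*N)"
    unfolding block_LH T1_def ip_def n_def G_def x_def y_def R_def by simp
  have T2: "(\<Sum>c<2*N. cnj (\<phi> (2*N+c)) * cnj (\<psi> (2*N+c))) * (\<Sum>b<2*N. \<psi> b * \<phi> b) +
      (\<Sum>c<2*N. cnj (\<phi> (2*N+c)) * Uv N U (\<lambda>q. \<psi> (2*N+q)) c) * (\<Sum>b<2*N. cnj (Uv N U \<psi> b) * \<phi> b) = cnj T1"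
    unfolding T1_def ip_def n_def G_def x_def y_def R_def by (simp add: cnj_sum mult_ac)
  have HL: "(\<Sum>c<2*N. \<Sum>b<2*N. cnj (\<phi> (2*N+c)) * \<phi> b * PhiU N U (\<lambda>p q. cnj (\<psi> p) * \<psi> q) (2*N+c) b)
      = - cnj T1 / of_nat (2*N)"
    unfolding block_HL T2 by simp
  have "BF (4*N) (W_op N U) \<psi> \<phi> = (ip n \<phi> \<phi> * ip n R R / of_nat (2*N) + - T1 / of_nat (2*N) + - cnj T1 / of_nat (2*N)
       + ip n G G * ip n \<psi> \<psi> / of_nat (2*N)) / of_nat (4*N)"
    unfolding stepA split4 LL HH LH HL by simp
  also have "\<dots> = (ip n \<phi> \<phi> * ip n R R + ip n G G * ip n \<psi> \<psi> - (T1 + cnj T1)) / (of_nat (2*N) * of_nat (4*N))"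
    by (cases "N = 0") (simp_all add: field_simps)
  also have "\<dots> = complex_of_real (nsq n \<phi> * nsq n R + nsq n G * nsq n \<psi> - 2 * Re T1) / (of_nat (2*N) * of_nat (4*N))"
    unfolding ip_self T_plus_cnj by simp
  finally show ?thesis .
qed

lemma Uv_antisym:
  assumes "antisymmetric_mat (2*N) U"
  shows "(\<Sum>a<2*N. v a * Uv N U v a) = 0"
proof -
  define S where "S = (\<Sum>a<2*N. \<Sum>p<2*N. v a * U a p * v p)"
  have S1: "(\<Sum>a<2*N. v a * Uv N U v a) = S"
    unfolding S_def Uv_def by (simp add: sum_distrib_left mult.assoc)
  have "S = (\<Sum>p<2*N. \<Sum>a<2*N. v a * U a p * v p)"
    unfolding S_def by (rule sum.swap)
  also have "\<dots> = (\<Sum>p<2*N. \<Sum>a<2*N. - (v p * U p a * v a))"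
  proof (rule sum.cong[OF refl], rule sum.cong[OF refl])
    fix p a assume "p \<in> {..<2*N}" "a \<in> {..<2*N}"
    then have "U a p = - U p a" using assms unfolding antisymmetric_mat_def lessThan_iff by blast
    then show "v a * U a p * v p = - (v p * U p a * v a)" by (simp add: mult_ac)
  qed
  also have "\<dots> = - S"
    unfolding S_def by (simp add: sum_negf)
  finally have "S = - S" .
  then have "S = 0" by simp
  then show ?thesis using S1 by simp
qed

lemma Uv_norm:
  assumes "unitary_mat (2*N) U"
  shows "nsq (2*N) (Uv N U v) = nsq (2*N) v"
proof -
  have u: "\<And>p q. p < 2*N \<Longrightarrow> q < 2*N \<Longrightarrow> (\<Sum>a<2*N. cnj (U a p) * U a q) = (if p = q then 1 else 0)"
    using assms unfolding unitary_mat_def by blast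
  have "ip (2*N) (Uv N U v) (Uv N U v) = (\<Sum>a<2*N. \<Sum>p<2*N. \<Sum>q<2*N. cnj (U a p) * U a q * (cnj (v p) * v q))"
    unfolding ip_def Uv_def
    by (intro sum.cong refl) (simp only: cnj_sum sum_product, intro sum.cong refl, simp add: mult_ac)
  also have "\<dots> = (\<Sum>p<2*N. \<Sum>a<2*N. \<Sum>q<2*N. cnj (U a p) * U a q * (cnj (v p) * v q))"
    by (rule sum.swap)
  also have "\<dots> = (\<Sum>p<2*N. \<Sum>q<2*N. \<Sum>a<2*N. cnj (U a p) * U a q * (cnj (v p) * v q))"
    by (rule sum.cong[OF refl], rule sum.swap)
  also have "\<dots> = (\<Sum>p<2*N. \<Sum>q<2*N. (\<Sum>a<2*N. cnj (U a p) * U a q) * (cnj (v p) * v q))"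
    by (simp add: sum_distrib_right)
  also have "\<dots> = (\<Sum>p<2*N. \<Sum>q<2*N. if p = q then cnj (v p) * v q else 0)"
    by (rule sum.cong[OF refl], rule sum.cong[OF refl]) (simp add: u)
  also have "\<dots> = ip (2*N) v v"
    unfolding ip_def by simp
  finally show ?thesis unfolding ip_self by simp
qed

lemma r1: fixes A B C D :: real shows "(A*B+C*D)^2 = (A^2+C^2)*(B^2+D^2) - (A*D - C*B)^2"
  by algebra

lemma cs2: "(cmod (a * b + c * d))\<^sup>2 \<le> ((cmod a)\<^sup>2 + (cmod c)\<^sup>2) * ((cmod b)\<^sup>2 + (cmod d)\<^sup>2)"
proof -
  have t: "cmod (a * b + c * d) \<le> cmod a * cmod b + cmod c * cmod d"
    by (metis norm_mult norm_triangle_ineq)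
  have "(cmod (a * b + c * d))\<^sup>2 \<le> (cmod a * cmod b + cmod c * cmod d)\<^sup>2"
    using t by (simp add: power_mono)
  also have "\<dots> \<le> ((cmod a)\<^sup>2 + (cmod c)\<^sup>2) * ((cmod b)\<^sup>2 + (cmod d)\<^sup>2)"
  proof -
    have "0 \<le> (cmod a * cmod d - cmod c * cmod b)\<^sup>2" by simp
    then show ?thesis unfolding r1 by linarith
  qed
  finally show ?thesis .
qed

lemma amgm_t: fixes t u v :: real
  assumes "0 \<le> u" "0 \<le> v" "t\<^sup>2 \<le> u * v"
  shows "2 * t \<le> u + v"
proof -
  have e: "(u+v)^2 = 4*(u*v) + (u-v)^2" by algebra
  have "0 \<le> (u-v)^2" by simp
  moreover have "(2*t)\<^sup>2 = 4 * t\<^sup>2" by (simp add: power_mult_distrib)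
  ultimately have "(2*t)\<^sup>2 \<le> (u+v)\<^sup>2" unfolding e using assms(3) by linarith
  then show ?thesis by (rule power2_le_imp_le) (use assms in simp)
qed

lemma ip_cmod_swap: "cmod (ip n u v) = cmod (ip n v u)"
  by (metis complex_mod_cnj ip_cnj)

lemma positivity:
  fixes N :: nat and U \<psi> \<phi>
  assumes un: "unitary_mat (2*N) U" and an: "antisymmetric_mat (2*N) U"
  defines "n \<equiv> 2*N"
  defines "R \<equiv> (\<lambda>c. \<psi> (n+c))" and "G \<equiv> (\<lambda>c. \<phi> (n+c))"
  defines "x \<equiv> (\<lambda>a. cnj (\<psi> a))" and "y \<equiv> (\<lambda>c. cnj (\<psi> (n+c)))"
  defines "T1 \<equiv> ip n \<phi> x * ip n y G + ip n \<phi> (Uv N U \<psi>) * ip n (Uv N U R) G"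
  shows "2 * Re T1 \<le> nsq n \<phi> * nsq n R + nsq n G * nsq n \<psi>"
proof -
  have ox: "ip n x (Uv N U \<psi>) = 0"
    unfolding ip_def x_def n_def using Uv_antisym[OF an] by simp
  have ex: "nsq n (Uv N U \<psi>) = nsq n x"
    unfolding n_def Uv_norm[OF un] unfolding nsq_def x_def by simp
  have oy: "ip n y (Uv N U R) = 0"
    unfolding ip_def y_def n_def R_def using Uv_antisym[OF an, of R] unfolding R_def n_def by simp
  have ey: "nsq n (Uv N U R) = nsq n y"
    unfolding n_def Uv_norm[OF un] unfolding nsq_def y_def R_def n_def by simp
  have b1: "(cmod (ip n \<phi> x))\<^sup>2 + (cmod (ip n \<phi> (Uv N U \<psi>)))\<^sup>2 \<le> nsq n x * nsq n \<phi>"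
    using bessel[OF ox ex, of \<phi>] ip_cmod_swap[of n \<phi> x] ip_cmod_swap[of n \<phi> "Uv N U \<psi>"] by simp
  have b2: "(cmod (ip n y G))\<^sup>2 + (cmod (ip n (Uv N U R) G))\<^sup>2 \<le> nsq n y * nsq n G"
    using bessel[OF oy ey, of G] .
  have nx: "nsq n x = nsq n \<psi>" unfolding nsq_def x_def by simp
  have ny: "nsq n y = nsq n R" unfolding nsq_def y_def R_def by simp
  have "(cmod T1)\<^sup>2 \<le> ((cmod (ip n \<phi> x))\<^sup>2 + (cmod (ip n \<phi> (Uv N U \<psi>)))\<^sup>2) *
           ((cmod (ip n y G))\<^sup>2 + (cmod (ip n (Uv N U R) G))\<^sup>2)"
    unfolding T1_def by (rule cs2)
  also have "\<dots> \<le> (nsq n x * nsq n \<phi>) * (nsq n y * nsq n G)"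
    by (rule mult_mono[OF b1 b2]) (simp_all add: nsq_nonneg)
  also have "\<dots> = (nsq n \<phi> * nsq n R) * (nsq n G * nsq n \<psi>)"
    unfolding nx ny by (simp add: mult_ac)
  finally have c: "(cmod T1)\<^sup>2 \<le> (nsq n \<phi> * nsq n R) * (nsq n G * nsq n \<psi>)" .
  have "2 * cmod T1 \<le> nsq n \<phi> * nsq n R + nsq n G * nsq n \<psi>"
    by (rule amgm_t[OF _ _ c]) (simp_all add: nsq_nonneg)
  moreover have "Re T1 \<le> cmod T1" by (rule complex_Re_le_cmod)
  ultimately show ?thesis by linarith
qed

lemma not_psd:
  fixes N :: nat and U
  assumes "N \<ge> 1"
  shows "\<not> psd_op (4*N) (W_op N U)"
proof
  assume p: "psd_op (4*N) (W_op N U)"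
  define S where "S = {(0::nat, 0::nat), (2*N, 2*N)}"
  define v where "v = (\<lambda>x::nat\<times>nat. if x \<in> S then (1::complex) else 0)"
  define R where "R = {..<4*N} \<times> {..<4*N}"
  have SR: "S \<subseteq> R" unfolding S_def R_def using assms by auto
  have fR: "finite R" unfolding R_def by simp
  have ne: "(0::nat, 0::nat) \<noteq> (2*N, 2*N)" using assms by simp
  have "(\<Sum>x\<in>R. \<Sum>y\<in>R. cnj (v x) * W_op N U x y * v y) = (\<Sum>x\<in>R. \<Sum>y\<in>R. if x \<in> S then (if y \<in> S then W_op N U x y else 0) else 0)"
    unfolding v_def by (intro sum.cong refl) auto
  also have "\<dots> = (\<Sum>x\<in>S. \<Sum>y\<in>S. W_op N U x y)"
  proof -
    have r: "\<And>g :: nat\<times>nat \<Rightarrow> complex. (\<Sum>x\<in>R. if x \<in> S then g x else 0) = (\<Sum>x\<in>S. g x)"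
      using fR SR by (intro sum.mono_neutral_cong_right) auto
    have "(\<Sum>x\<in>R. \<Sum>y\<in>R. if x \<in> S then (if y \<in> S then W_op N U x y else 0) else 0) =
       (\<Sum>x\<in>R. if x \<in> S then (\<Sum>y\<in>R. if y \<in> S then W_op N U x y else 0) else 0)"
      by (rule sum.cong[OF refl]) simp
    then show ?thesis by (simp only: r)
  qed
  also have "\<dots> = W_op N U (0,0) (0,0) + W_op N U (0,0) (2*N,2*N) + W_op N U (2*N,2*N) (0,0) + W_op N U (2*N,2*N) (2*N,2*N)"
    unfolding S_def using ne by simp
  also have "\<dots> = - 2 / (of_nat (2*N) * of_nat (4*N))"
    using assms unfolding W_op_def PhiU_def mat_unit_def Let_def by (simp add: field_simps)
  finally have e: "(\<Sum>x\<in>R. \<Sum>y\<in>R. cnj (v x) * W_op N U x y * v y) = - 2 / (of_nat (2*N) * of_nat (4*N))" .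
  have "0 \<le> (\<Sum>x\<in>R. \<Sum>y\<in>R. cnj (v x) * W_op N U x y * v y)"
    using p unfolding psd_op_def R_def by blast
  then have "0 \<le> Re (- 2 / (of_nat (2*N) * of_nat (4*N)) :: complex)"
    unfolding e by (simp add: less_eq_complex_def)
  moreover have "Re (- 2 / (of_nat (2*N) * of_nat (4*N)) :: complex) < 0"
    using assms by (simp add: Re_divide)
  ultimately show False by simp
qed

definition hf :: "'a set \<Rightarrow> ('a \<Rightarrow> 'a \<Rightarrow> complex) \<Rightarrow> ('a \<Rightarrow> complex) \<Rightarrow> ('a \<Rightarrow> complex) \<Rightarrow> complex" where
  "hf R A u v = (\<Sum>x\<in>R. \<Sum>y\<in>R. cnj (u x) * A x y * v y)"

lemma hf_diff_left: "hf R A (\<lambda>x. u x - v x) w = hf R A u w - hf R A v w"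
  unfolding hf_def by (simp add: algebra_simps sum_subtractf)
lemma hf_diff_right: "hf R A w (\<lambda>x. u x - v x) = hf R A w u - hf R A w v"
  unfolding hf_def by (simp add: algebra_simps sum_subtractf)
lemma hf_scale_left: "hf R A (\<lambda>x. c * u x) w = cnj c * hf R A u w"
  unfolding hf_def by (simp add: sum_distrib_left mult_ac)
lemma hf_scale_right: "hf R A w (\<lambda>x. c * u x) = c * hf R A w u"
  unfolding hf_def by (simp add: sum_distrib_left mult_ac)

lemma psd_kernel:
  fixes A :: "'a \<Rightarrow> 'a \<Rightarrow> complex"
  assumes fin: "finite R"
    and herm: "\<forall>x\<in>R. \<forall>y\<in>R. A y x = cnj (A x y)"
    and pos: "\<forall>v. 0 \<le> hf R A v v"
    and z0: "hf R A z z = 0"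
    and x0: "x0 \<in> R"
  shows "(\<Sum>y\<in>R. A x0 y * z y) = 0"
proof -
  define w where "w x = (\<Sum>y\<in>R. A x y * z y)" for x
  define s where "s = (\<Sum>x\<in>R. (cmod (w x))\<^sup>2)"
  have s0: "s \<ge> 0" unfolding s_def by (simp add: sum_nonneg)
  have hwz: "hf R A w z = of_real s"
  proof -
    have "hf R A w z = (\<Sum>x\<in>R. cnj (w x) * w x)"
      unfolding hf_def by (rule sum.cong[OF refl]) (simp add: w_def sum_distrib_left mult.assoc)
    also have "\<dots> = (\<Sum>x\<in>R. complex_of_real ((cmod (w x))\<^sup>2))" by (simp only: cnj_self)
    finally show ?thesis unfolding s_def by (simp only: of_real_sum)
  qed
  have hzw: "hf R A z w = of_real s"
  proof -
    have "hf R A z w = (\<Sum>y\<in>R. \<Sum>x\<in>R. cnj (z x) * A x y * w y)"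
      unfolding hf_def by (rule sum.swap)
    also have "\<dots> = (\<Sum>y\<in>R. (\<Sum>x\<in>R. cnj (z x) * A x y) * w y)"
      by (simp add: sum_distrib_right)
    also have "\<dots> = (\<Sum>y\<in>R. cnj (w y) * w y)"
    proof (rule sum.cong[OF refl])
      fix y assume y: "y \<in> R"
      have "(\<Sum>x\<in>R. cnj (z x) * A x y) = (\<Sum>x\<in>R. cnj (A y x * z x))"
      proof (rule sum.cong[OF refl])
        fix x assume x: "x \<in> R"
        have "A y x = cnj (A x y)" using herm x y by blast
        then show "cnj (z x) * A x y = cnj (A y x * z x)" by (simp add: mult.commute)
      qed
      also have "\<dots> = cnj (w y)" unfolding w_def by (simp add: cnj_sum)
      finally show "(\<Sum>x\<in>R. cnj (z x) * A x y) * w y = cnj (w y) * w y" by simp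
    qed
    also have "\<dots> = (\<Sum>x\<in>R. complex_of_real ((cmod (w x))\<^sup>2))" by (simp only: cnj_self)
    finally show ?thesis unfolding s_def by (simp only: of_real_sum)
  qed
  define c where "c = hf R A w w"
  have c0: "Re c \<ge> 0" using pos unfolding c_def by (simp add: less_eq_complex_def)
  have expand: "Re (hf R A (\<lambda>x. z x - complex_of_real r * w x) (\<lambda>x. z x - complex_of_real r * w x)) = - 2 * r * s + r\<^sup>2 * Re c" for r
  proof -
    have "hf R A (\<lambda>x. z x - complex_of_real r * w x) (\<lambda>x. z x - complex_of_real r * w x)
       = hf R A z z - of_real r * hf R A z w - (of_real r * hf R A w z - of_real r * (of_real r * c))"
      unfolding c_def by (simp add: hf_diff_left hf_diff_right hf_scale_left hf_scale_right)
    then show ?thesis unfolding z0 hwz hzw by (simp add: power2_eq_square)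
  qed
  have "s = 0"
  proof (rule ccontr)
    assume "s \<noteq> 0"
    then have sp: "s > 0" using s0 by simp
    define r where "r = s / (Re c + 1)"
    have rp: "r > 0" unfolding r_def using sp c0 by simp
    have "r * Re c \<le> s"
    proof -
      have "r * Re c = s * (Re c / (Re c + 1))" unfolding r_def by simp
      also have "\<dots> \<le> s * 1" using sp c0 by (intro mult_left_mono) simp_all
      finally show ?thesis by simp
    qed
    then have neg: "r * Re c - 2 * s < 0" using sp by simp
    have "- 2 * r * s + r\<^sup>2 * Re c = r * (r * Re c - 2 * s)" by (simp add: power2_eq_square algebra_simps)
    also have "\<dots> < 0" using rp neg by (simp add: mult_pos_neg)
    finally have "Re (hf R A (\<lambda>x. z x - complex_of_real r * w x) (\<lambda>x. z x - complex_of_real r * w x)) < 0"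
      unfolding expand .
    moreover have "0 \<le> Re (hf R A (\<lambda>x. z x - complex_of_real r * w x) (\<lambda>x. z x - complex_of_real r * w x))"
      using pos by (simp add: less_eq_complex_def)
    ultimately show False by simp
  qed
  then have "(cmod (w x0))\<^sup>2 = 0"
    using fin x0 unfolding s_def by (subst (asm) sum_nonneg_eq_0_iff) auto
  then show ?thesis unfolding w_def by simp
qed

lemma bp_BF: "block_positive d M \<longleftrightarrow> (\<forall>\<psi> \<phi>. 0 \<le> BF d M \<psi> \<phi>)"
  unfolding block_positive_def BF_def by simp

lemma BF_diff: "BF d (\<lambda>x y. M x y - A x y) \<psi> \<phi> = BF d M \<psi> \<phi> - BF d A \<psi> \<phi>"
  unfolding BF_def by (simp add: algebra_simps sum_subtractf)

lemma sum_prod_split: "(\<Sum>x\<in>A\<times>B. f x) = (\<Sum>a\<in>A. \<Sum>b\<in>B. f (a, b))"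
  by (simp add: sum.cartesian_product)

lemma hf_BF: "hf ({..<d}\<times>{..<d}) A (\<lambda>(i,a). \<psi> i * \<phi> a) (\<lambda>(i,a). \<psi> i * \<phi> a) = BF d A \<psi> \<phi>"
  unfolding hf_def BF_def sum_prod_split by simp

lemma BF_W_nonneg:
  fixes N :: nat
  assumes un: "unitary_mat (2*N) U" and an: "antisymmetric_mat (2*N) U"
  shows "0 \<le> BF (4*N) (W_op N U) \<psi> \<phi>"
proof -
  define Q where "Q = nsq (2*N) \<phi> * nsq (2*N) (\<lambda>c. \<psi> (2*N+c)) + nsq (2*N) (\<lambda>c. \<phi> (2*N+c)) * nsq (2*N) \<psi> -
     2 * Re (ip (2*N) \<phi> (\<lambda>a. cnj (\<psi> a)) * ip (2*N) (\<lambda>c. cnj (\<psi> (2*N+c))) (\<lambda>c. \<phi> (2*N+c)) +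
             ip (2*N) \<phi> (Uv N U \<psi>) * ip (2*N) (Uv N U (\<lambda>c. \<psi> (2*N+c))) (\<lambda>c. \<phi> (2*N+c)))"
  have Q0: "0 \<le> Q" unfolding Q_def using positivity[OF un an, of \<phi> \<psi>] by simp
  have "BF (4*N) (W_op N U) \<psi> \<phi> = complex_of_real Q / (of_nat (2*N) * of_nat (4*N))"
    unfolding Q_def by (rule keyform)
  also have "\<dots> = complex_of_real (Q / (real (2*N) * real (4*N)))" by simp
  finally show ?thesis using Q0 by (simp add: less_eq_complex_def)
qed

lemma BF_W_zero:
  fixes N :: nat
  assumes an: "antisymmetric_mat (2*N) U"
  shows "BF (4*N) (W_op N U) \<psi> (\<lambda>k. cnj (\<psi> k)) = 0"
proof -
  define x where "x = (\<lambda>a. cnj (\<psi> a))"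
  define y where "y = (\<lambda>c. cnj (\<psi> (2*N+c)))"
  have ox: "ip (2*N) x (Uv N U \<psi>) = 0"
    unfolding ip_def x_def using Uv_antisym[OF an] by simp
  have nx: "nsq (2*N) x = nsq (2*N) \<psi>" unfolding nsq_def x_def by simp
  have ny: "nsq (2*N) y = nsq (2*N) (\<lambda>c. \<psi> (2*N+c))" unfolding nsq_def y_def by simp
  have "BF (4*N) (W_op N U) \<psi> x = complex_of_real (nsq (2*N) x * nsq (2*N) (\<lambda>c. \<psi> (2*N+c)) + nsq (2*N) y * nsq (2*N) \<psi> -
     2 * Re (ip (2*N) x x * ip (2*N) y y + ip (2*N) x (Uv N U \<psi>) * ip (2*N) (Uv N U (\<lambda>c. \<psi> (2*N+c))) y))
      / (of_nat (2*N) * of_nat (4*N))"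
    using keyform[of N U \<psi> x] unfolding x_def y_def by simp
  also have "\<dots> = 0"
    unfolding ox ip_self nx ny by simp
  finally show ?thesis unfolding x_def .
qed

lemma span_identity:
  fixes j b :: nat
  defines "e \<equiv> (\<lambda>t k. if k = t then (1::complex) else 0)"
  defines "Z \<equiv> (\<lambda>\<psi> (y::nat\<times>nat). (case y of (i,a) \<Rightarrow> \<psi> i * cnj (\<psi> a)))"
  shows "2 * (if y = (j,b) then 1 else 0) =
     Z (\<lambda>k. e j k + e b k) y - Z (e j) y - Z (e b) y +
     \<i> * (Z (\<lambda>k. e j k + \<i> * e b k) y - Z (e j) y - Z (e b) y)"
  unfolding Z_def e_def
  by (cases y) (auto simp: algebra_simps)

theorem proposition3:
  fixes N :: nat and U :: "nat \<Rightarrow> nat \<Rightarrow> complex"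
  assumes "N \<ge> 1"
    and "unitary_mat (2 * N) U"
    and "antisymmetric_mat (2 * N) U"
  shows "optimal_entanglement_witness (4 * N) (W_op N U)"
proof -
  have bp: "block_positive (4*N) (W_op N U)"
    unfolding bp_BF using BF_W_nonneg[OF assms(2,3)] by blast
  have np: "\<not> psd_op (4*N) (W_op N U)" using not_psd[OF assms(1)] .
  have opt: "\<not> (\<exists>A. psd_op (4*N) A \<and> nonzero_op (4*N) A \<and> block_positive (4*N) (\<lambda>x y. W_op N U x y - A x y))"
  proof
    assume "\<exists>A. psd_op (4*N) A \<and> nonzero_op (4*N) A \<and> block_positive (4*N) (\<lambda>x y. W_op N U x y - A x y)"
    then obtain A where psd: "psd_op (4*N) A" and nz: "nonzero_op (4*N) A"
      and bpA: "block_positive (4*N) (\<lambda>x y. W_op N U x y - A x y)" by blast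
    define R where "R = {..<4*N} \<times> {..<4*N}"
    define Z where "Z = (\<lambda>\<psi> (y::nat\<times>nat). (case y of (i,a) \<Rightarrow> \<psi> i * cnj (\<psi> a)))"
    have fin: "finite R" unfolding R_def by simp
    have herm: "\<forall>x\<in>R. \<forall>y\<in>R. A y x = cnj (A x y)" using psd unfolding psd_op_def R_def by blast
    have pos: "\<forall>v. 0 \<le> hf R A v v" using psd unfolding psd_op_def R_def hf_def by blast
    have ker: "(\<Sum>y\<in>R. A x0 y * Z \<psi> y) = 0" if x0: "x0 \<in> R" for x0 \<psi>
    proof -
      have zz: "Z \<psi> = (\<lambda>(i,a). \<psi> i * (\<lambda>k. cnj (\<psi> k)) a)" unfolding Z_def by (auto simp: fun_eq_iff)
      have h: "hf R A (Z \<psi>) (Z \<psi>) = BF (4*N) A \<psi> (\<lambda>k. cnj (\<psi> k))"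
        unfolding zz R_def by (rule hf_BF)
      have "0 \<le> BF (4*N) (\<lambda>x y. W_op N U x y - A x y) \<psi> (\<lambda>k. cnj (\<psi> k))"
        using bpA unfolding bp_BF by blast
      then have le: "BF (4*N) A \<psi> (\<lambda>k. cnj (\<psi> k)) \<le> 0"
        unfolding BF_diff BF_W_zero[OF assms(3)] by simp
      have ge: "0 \<le> hf R A (Z \<psi>) (Z \<psi>)" using pos by blast
      have "hf R A (Z \<psi>) (Z \<psi>) = 0" using le ge unfolding h by (rule order.antisym)
      then show ?thesis by (rule psd_kernel[OF fin herm pos _ x0])
    qed
    have allzero: "A x0 (j,b) = 0" if x0: "x0 \<in> R" and jb: "(j,b) \<in> R" for x0 j b
    proof -
      define e where "e = (\<lambda>(t::nat) (k::nat). if k = t then (1::complex) else 0)"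
      have "2 * A x0 (j,b) = (\<Sum>y\<in>R. A x0 y * (2 * (if y = (j,b) then 1 else 0)))"
        using fin jb by (simp add: if_distrib[of "\<lambda>t. _ * (2 * t)"] sum.delta cong: if_cong)
      also have "\<dots> = (\<Sum>y\<in>R. A x0 y * (Z (\<lambda>k. e j k + e b k) y - Z (e j) y - Z (e b) y +
         \<i> * (Z (\<lambda>k. e j k + \<i> * e b k) y - Z (e j) y - Z (e b) y)))"
        unfolding Z_def e_def by (intro sum.cong refl) (subst span_identity, simp)
      also have "\<dots> = (\<Sum>y\<in>R. A x0 y * Z (\<lambda>k. e j k + e b k) y) - (\<Sum>y\<in>R. A x0 y * Z (e j) y) - (\<Sum>y\<in>R. A x0 y * Z (e b) y) +
         \<i> * ((\<Sum>y\<in>R. A x0 y * Z (\<lambda>k. e j k + \<i> * e b k) y) - (\<Sum>y\<in>R. A x0 y * Z (e j) y) - (\<Sum>y\<in>R. A x0 y * Z (e b) y))"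
        by (simp add: algebra_simps sum.distrib sum_subtractf sum_distrib_left)
      also have "\<dots> = 0" using ker[OF x0] by simp
      finally show ?thesis by simp
    qed
    then show False using nz unfolding nonzero_op_def R_def by auto
  qed
  show ?thesis
    unfolding optimal_entanglement_witness_def entanglement_witness_def
    using bp np opt by blast
qed

end
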